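(* Let $X$ be a Banach lattice with order continuous norm and $S$ a convex $C_0$-semigroup on $X$. Suppose that $S'_+(t,x)y=S'_-(t,x)y$ for some $x,y\in X$ and some $t\ge0$. Then the maps $[0,\infty)\to X$, $s\mapsto S'_\pm(s,x)y$ are continuous at $t$. In particular, $\lim_{s\downarrow0}S'_\pm(s,x)y=y$.
   Context: A Banach lattice $X$ has order continuous norm if $\|x_\alpha\|\to0$ for every net $x_\alpha\downarrow0$. An operator $T\colon X\to X$ is convex if $T(\lambda x+(1-\lambda)y)\le\lambda Tx+(1-\lambda)Ty$, bounded if $\sup_{\|x\|\le r}\|Tx\|<\infty$ for all $r>0$. A convex $C_0$-semigroup is a family $(S(t))_{t\ge0}$ of bounded convex operators $X\to X$ with $S(0)=\mathrm{id}$, $S(t+s)=S(t)S(s)$, and $S(t)x\to x$ as $t\downarrow0$. For $t\ge0$, $x,y\in X$: $S'_+(t,x)y:=\inf_{h>0}\frac{S(t)(x+hy)-S(t)x}{h}$ and $S'_-(t,x)y:=\sup_{h<0}\frac{S(t)(x+hy)-S(t)x}{h}$ (lattice infimum/supremum, which exist in $X$). *)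

theory Defs
  imports "HOL-Analysis.Analysis"
begin

definition lat_abs :: "'a::{ordered_real_vector, lattice} \<Rightarrow> 'a" where
  "lat_abs x = sup x (- x)"

definition banach_lattice :: "'a::{banach, ordered_real_vector, lattice} itself \<Rightarrow> bool" where
  "banach_lattice _ \<longleftrightarrow>
     (\<forall>x y::'a. lat_abs x \<le> lat_abs y \<longrightarrow> norm x \<le> norm y)"

definition is_lat_inf :: "'a::order set \<Rightarrow> 'a \<Rightarrow> bool" where
  "is_lat_inf A z \<longleftrightarrow> (\<forall>a\<in>A. z \<le> a) \<and> (\<forall>w. (\<forall>a\<in>A. w \<le> a) \<longrightarrow> w \<le> z)"

definition is_lat_sup :: "'a::order set \<Rightarrow> 'a \<Rightarrow> bool" where
  "is_lat_sup A z \<longleftrightarrow> (\<forall>a\<in>A. a \<le> z) \<and> (\<forall>w. (\<forall>a\<in>A. a \<le> w) \<longrightarrow> z \<le> w)"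

definition lat_Inf :: "'a::order set \<Rightarrow> 'a" where
  "lat_Inf A = (THE z. is_lat_inf A z)"

definition lat_Sup :: "'a::order set \<Rightarrow> 'a" where
  "lat_Sup A = (THE z. is_lat_sup A z)"

text \<open>Order continuous norm: for every net decreasing to 0 the norms tend to 0.
  A net \<open>x\<^sub>\<alpha> \<down> 0\<close> is represented by its range D: a nonempty downward directed
  set with lattice infimum 0, directed by the reverse order; the net is the
  identity on D.\<close>

definition order_continuous_norm :: "'a::{real_normed_vector, ordered_real_vector, lattice} itself \<Rightarrow> bool" where
  "order_continuous_norm _ \<longleftrightarrow>
     (\<forall>D::'a set. D \<noteq> {} \<and> (\<forall>a\<in>D. \<forall>b\<in>D. \<exists>c\<in>D. c \<le> a \<and> c \<le> b) \<and> is_lat_inf D 0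
        \<longrightarrow> ((\<lambda>d. norm d) \<longlongrightarrow> 0) (INF d\<in>D. principal {e\<in>D. e \<le> d}))"

definition convex_operator :: "('a::{ordered_real_vector} \<Rightarrow> 'a) \<Rightarrow> bool" where
  "convex_operator T \<longleftrightarrow>
     (\<forall>x y. \<forall>c::real. 0 \<le> c \<and> c \<le> 1 \<longrightarrow>
        T (c *\<^sub>R x + (1 - c) *\<^sub>R y) \<le> c *\<^sub>R T x + (1 - c) *\<^sub>R T y)"

definition bounded_operator :: "('a::real_normed_vector \<Rightarrow> 'a) \<Rightarrow> bool" where
  "bounded_operator T \<longleftrightarrow> (\<forall>r>0. \<exists>C. \<forall>x. norm x \<le> r \<longrightarrow> norm (T x) \<le> C)"

definition convex_C0_semigroup ::
    "(real \<Rightarrow> 'a::{real_normed_vector, ordered_real_vector} \<Rightarrow> 'a) \<Rightarrow> bool" where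
  "convex_C0_semigroup S \<longleftrightarrow>
     (\<forall>t\<ge>0. convex_operator (S t) \<and> bounded_operator (S t)) \<and>
     S 0 = id \<and>
     (\<forall>t\<ge>0. \<forall>s\<ge>0. S (t + s) = S t \<circ> S s) \<and>
     (\<forall>x. ((\<lambda>t. S t x) \<longlongrightarrow> x) (at_right 0))"

definition dir_deriv_plus ::
    "(real \<Rightarrow> 'a::{ordered_real_vector, lattice} \<Rightarrow> 'a) \<Rightarrow> real \<Rightarrow> 'a \<Rightarrow> 'a \<Rightarrow> 'a" where
  "dir_deriv_plus S t x y =
     lat_Inf {(1 / h) *\<^sub>R (S t (x + h *\<^sub>R y) - S t x) | h. h > 0}"

definition dir_deriv_minus ::
    "(real \<Rightarrow> 'a::{ordered_real_vector, lattice} \<Rightarrow> 'a) \<Rightarrow> real \<Rightarrow> 'a \<Rightarrow> 'a \<Rightarrow> 'a" where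
  "dir_deriv_minus S t x y =
     lat_Sup {(1 / h) *\<^sub>R (S t (x + h *\<^sub>R y) - S t x) | h. h < 0}"

end

theory Submission
  imports Defs
begin

lemma two_ge0: fixes w :: "'a::ordered_real_vector" assumes "0 \<le> w + w" shows "0 \<le> w"
proof -
  have e: "w = (1/2::real) *\<^sub>R (w + w)" unfolding scaleR_2[symmetric] by simp
  have "0 \<le> (1/2::real) *\<^sub>R (w + w)" by (rule scaleR_nonneg_nonneg[OF _ assms]) simp
  thus ?thesis using e[symmetric] by (rule ord_le_eq_trans)
qed

lemma lat_abs_ge0: fixes z :: "'a::{ordered_real_vector,lattice}" shows "0 \<le> lat_abs z"
proof -
  have "z \<le> lat_abs z" unfolding lat_abs_def by (rule sup_ge1)
  moreover have "- z \<le> lat_abs z" unfolding lat_abs_def by (rule sup_ge2)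
  ultimately have "z + - z \<le> lat_abs z + lat_abs z" by (rule add_mono)
  hence "0 \<le> lat_abs z + lat_abs z" by (simp only: right_minus)
  thus ?thesis by (rule two_ge0)
qed

lemma lat_abs_pos: fixes z :: "'a::{ordered_real_vector,lattice}" assumes "0 \<le> z" shows "lat_abs z = z"
proof -
  have "- z \<le> 0" using assms by (simp only: neg_le_0_iff_le)
  hence "- z \<le> z" using assms by (rule order_trans)
  thus ?thesis unfolding lat_abs_def by (rule sup_absorb1)
qed

lemma bl_norm_le:
  fixes u v :: "'a::{banach,ordered_real_vector,lattice}"
  assumes bl: "banach_lattice TYPE('a)" and "- v \<le> u" "u \<le> v"
  shows "norm u \<le> norm v"
proof -
  have "- v \<le> v" using assms order_trans by blast
  hence "- v + v \<le> v + v" by (rule add_right_mono)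
  hence "0 \<le> v + v" by (simp only: left_minus)
  hence v0: "0 \<le> v" by (rule two_ge0)
  have "- u \<le> - (- v)" using assms(2) by (rule neg_le_iff_le[THEN iffD2])
  hence mu: "- u \<le> v" by (simp only: minus_minus)
  have "lat_abs u \<le> v" unfolding lat_abs_def using assms(3) mu by (rule sup_least)
  hence "lat_abs u \<le> lat_abs v" using lat_abs_pos[OF v0] by (rule ord_le_eq_trans[OF _ sym])
  thus ?thesis using bl unfolding banach_lattice_def by blast
qed

lemma bl_norm_abs:
  fixes u :: "'a::{banach,ordered_real_vector,lattice}"
  assumes bl: "banach_lattice TYPE('a)"
  shows "norm (lat_abs u) \<le> norm u"
proof -
  have "lat_abs (lat_abs u) \<le> lat_abs u" using lat_abs_pos[OF lat_abs_ge0[of u]] by (rule order_eq_refl)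
  thus ?thesis using bl unfolding banach_lattice_def by blast
qed

lemma bl_sandwich:
  fixes a u b :: "'a::{banach,ordered_real_vector,lattice}"
  assumes bl: "banach_lattice TYPE('a)" and "a \<le> u" "u \<le> b"
  shows "norm u \<le> norm a + norm b"
proof -
  let ?v = "lat_abs a + lat_abs b"
  have "u \<le> ?v"
  proof -
    have "u \<le> lat_abs b" using assms(3) by (auto simp: lat_abs_def intro: order_trans)
    thus ?thesis using lat_abs_ge0[of a] by (metis add_increasing)
  qed
  moreover have "- u \<le> ?v"
  proof -
    have "- u \<le> - a" using assms(2) by simp
    hence "- u \<le> lat_abs a" unfolding lat_abs_def by (rule order_trans) simp
    thus ?thesis using lat_abs_ge0[of b] by (metis add_increasing2)
  qed
  ultimately have "norm u \<le> norm ?v" by (intro bl_norm_le[OF bl]) (use minus_le_iff in blast)+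
  also have "\<dots> \<le> norm (lat_abs a) + norm (lat_abs b)" by (rule norm_triangle_ineq)
  also have "\<dots> \<le> norm a + norm b" using bl_norm_abs[OF bl] by (simp add: add_mono)
  finally show ?thesis .
qed

lemma bl_sup_lip:
  fixes z w a :: "'a::{banach,ordered_real_vector,lattice}"
  assumes bl: "banach_lattice TYPE('a)"
  shows "norm (sup z a - sup w a) \<le> norm (z - w)"
proof -
  let ?e = "lat_abs (z - w)"
  have e0: "0 \<le> ?e" by (rule lat_abs_ge0)
  have e': "lat_abs (w - z) = ?e" by (simp add: lat_abs_def sup_commute)
  have "z - w \<le> ?e" by (simp add: lat_abs_def)
  hence "z \<le> w + ?e" by (simp add: diff_le_eq add.commute)
  have 1: "sup z a \<le> sup w a + ?e"
  proof (rule sup_least)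
    show "z \<le> sup w a + ?e" using \<open>z \<le> w + ?e\<close> by (meson add_right_mono order_trans sup_ge1)
    show "a \<le> sup w a + ?e" using e0 by (meson add_increasing2 sup_ge2)
  qed
  have "w - z \<le> ?e" using e' by (simp add: lat_abs_def)
  hence "w \<le> z + ?e" by (simp add: diff_le_eq add.commute)
  have 2: "sup w a \<le> sup z a + ?e"
  proof (rule sup_least)
    show "w \<le> sup z a + ?e" using \<open>w \<le> z + ?e\<close> by (meson add_right_mono order_trans sup_ge1)
    show "a \<le> sup z a + ?e" using e0 by (meson add_increasing2 sup_ge2)
  qed
  have "norm (sup z a - sup w a) \<le> norm ?e"
    using 1 2 by (intro bl_norm_le[OF bl]) (auto simp: algebra_simps)
  also have "\<dots> \<le> norm (z - w)" by (rule bl_norm_abs[OF bl])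
  finally show ?thesis .
qed

lemma bl_lim_le:
  fixes f :: "'b \<Rightarrow> 'a::{banach,ordered_real_vector,lattice}"
  assumes bl: "banach_lattice TYPE('a)" and lim: "(f \<longlongrightarrow> z) F" and F: "F \<noteq> bot"
    and ev: "eventually (\<lambda>i. f i \<le> a) F"
  shows "z \<le> a"
proof -
  have "((\<lambda>i. sup (f i) a) \<longlongrightarrow> sup z a) F"
  proof (rule tendstoI)
    fix e :: real assume "0 < e"
    hence "eventually (\<lambda>i. dist (f i) z < e) F" using lim by (rule tendstoD[rotated])
    thus "eventually (\<lambda>i. dist (sup (f i) a) (sup z a) < e) F"
    proof eventually_elim
      case (elim i)
      have "norm (sup (f i) a - sup z a) \<le> norm (f i - z)" by (rule bl_sup_lip[OF bl])
      thus ?case using elim unfolding dist_norm by linarith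
    qed
  qed
  moreover have "((\<lambda>i. sup (f i) a) \<longlongrightarrow> a) F"
  proof (rule tendsto_eventually)
    show "eventually (\<lambda>i. sup (f i) a = a) F" using ev by (rule eventually_mono) (rule sup_absorb2)
  qed
  ultimately have "sup z a = a" using F tendsto_unique by blast
  thus ?thesis by (metis sup.orderI sup_commute)
qed

lemma bl_lim_ge:
  fixes f :: "'b \<Rightarrow> 'a::{banach,ordered_real_vector,lattice}"
  assumes bl: "banach_lattice TYPE('a)" and lim: "(f \<longlongrightarrow> z) F" and F: "F \<noteq> bot"
    and ev: "eventually (\<lambda>i. a \<le> f i) F"
  shows "a \<le> z"
proof -
  have "- z \<le> - a"
    by (rule bl_lim_le[OF bl tendsto_minus[OF lim] F]) (use ev in \<open>rule eventually_mono, simp\<close>)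
  thus ?thesis by simp
qed

lemma bl_archimedean:
  fixes p c :: "'a::{banach,ordered_real_vector,lattice}"
  assumes bl: "banach_lattice TYPE('a)" and p0: "0 \<le> p" and le: "\<And>n::nat. real n *\<^sub>R p \<le> c"
  shows "p = 0"
proof (rule ccontr)
  assume "p \<noteq> 0"
  hence np: "norm p > 0" by simp
  obtain n :: nat where n: "real n > norm c / norm p" using reals_Archimedean2 by blast
  have np0: "0 \<le> real n *\<^sub>R p" by (simp add: p0 scaleR_nonneg_nonneg)
  hence "0 \<le> c" using le[of n] by (rule order_trans)
  hence "- c \<le> real n *\<^sub>R p" using np0 by (meson neg_le_0_iff_le order_trans)
  hence "norm (real n *\<^sub>R p) \<le> norm c"
    using le[of n] by (intro bl_norm_le[OF bl])
  hence "real n * norm p \<le> norm c" by simp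
  with n np show False by (simp add: field_simps)
qed

lemma oc_mono_inf:
  fixes f :: "real \<Rightarrow> 'a::{banach,ordered_real_vector,lattice}"
  assumes bl: "banach_lattice TYPE('a)" and oc: "order_continuous_norm TYPE('a)"
    and mono: "\<And>h1 h2. 0 < h1 \<Longrightarrow> h1 \<le> h2 \<Longrightarrow> f h1 \<le> f h2"
    and lb: "\<And>h. 0 < h \<Longrightarrow> b \<le> f h"
  shows "\<exists>c. is_lat_inf (f ` {0<..}) c \<and> (f \<longlongrightarrow> c) (at_right 0)"
proof -
  define L where "L = {u. \<forall>h>0. u \<le> f h}"
  define D where "D = {f h - u | h u. h > 0 \<and> u \<in> L}"
  have bL: "b \<in> L" unfolding L_def using lb by blast
  have "f 1 - b \<in> D" unfolding D_def using bL zero_less_one by blast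
  hence Dne: "D \<noteq> {}" by blast
  have dir: "\<forall>a\<in>D. \<forall>b\<in>D. \<exists>c\<in>D. c \<le> a \<and> c \<le> b"
  proof (intro ballI)
    fix a1 a2 assume "a1 \<in> D" "a2 \<in> D"
    then obtain h1 u1 h2 u2 where a: "a1 = f h1 - u1" "a2 = f h2 - u2" "h1 > 0" "h2 > 0"
      "u1 \<in> L" "u2 \<in> L" using \<open>a1 \<in> D\<close> \<open>a2 \<in> D\<close> unfolding D_def by blast
    have sL: "sup u1 u2 \<in> L" using a(5,6) unfolding L_def by (blast intro: sup_least)
    have m: "min h1 h2 > 0" using a by simp
    have "f (min h1 h2) - sup u1 u2 \<in> D" unfolding D_def using sL m by blast
    moreover have "f (min h1 h2) - sup u1 u2 \<le> a1"
      unfolding a(1) by (rule diff_mono[OF mono[OF m] sup_ge1]) simp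
    moreover have "f (min h1 h2) - sup u1 u2 \<le> a2"
      unfolding a(2) by (rule diff_mono[OF mono[OF m] sup_ge2]) simp
    ultimately show "\<exists>c\<in>D. c \<le> a1 \<and> c \<le> a2" by blast
  qed
  have inf0: "is_lat_inf D 0"
    unfolding is_lat_inf_def
  proof (intro conjI allI impI ballI)
    fix d assume "d \<in> D"
    then obtain h u where "d = f h - u" "h > 0" "u \<in> L" unfolding D_def by blast
    thus "0 \<le> d" unfolding L_def by simp
  next
    fix w assume wle: "\<forall>a\<in>D. w \<le> a"
    define p where "p = sup w 0"
    have p0: "0 \<le> p" by (simp add: p_def)
    have ple: "p \<le> f h - u" if "h > 0" "u \<in> L" for h u
    proof -
      have "f h - u \<in> D" unfolding D_def using that by blast
      hence "w \<le> f h - u" using wle by blast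
      moreover have "0 \<le> f h - u" using that unfolding L_def by simp
      ultimately show ?thesis unfolding p_def by (rule sup_least)
    qed
    have inL: "b + real n *\<^sub>R p \<in> L" for n :: nat
    proof (induction n)
      case 0 then show ?case using bL by simp
    next
      case (Suc n)
      have eq: "b + real (Suc n) *\<^sub>R p = (b + real n *\<^sub>R p) + p" by (simp add: algebra_simps)
      have le: "(b + real n *\<^sub>R p) + p \<le> f h" if "h > 0" for h
        unfolding add.commute[of "b + real n *\<^sub>R p" p]
        by (rule le_diff_eq[THEN iffD1, OF ple[OF that Suc]])
      show ?case unfolding L_def mem_Collect_eq eq using le by blast
    qed
    have "real n *\<^sub>R p \<le> f 1 - b" for n :: nat
    proof -
      have "b + real n *\<^sub>R p \<le> f 1" using inL[of n] by (simp add: L_def)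
      thus ?thesis unfolding add.commute[of b] by (rule le_diff_eq[THEN iffD2])
    qed
    hence "p = 0" by (rule bl_archimedean[OF bl p0])
    moreover have "w \<le> p" unfolding p_def by (rule sup_ge1)
    ultimately show "w \<le> 0" by simp
  qed
  define F where "F = (INF d\<in>D. principal {e\<in>D. e \<le> d})"
  have lim: "((\<lambda>d. norm d) \<longlongrightarrow> 0) F"
    using oc Dne dir inf0 unfolding order_continuous_norm_def F_def by blast
  have key: "\<exists>h0>0. \<exists>u0\<in>L. \<forall>h. 0 < h \<and> h \<le> h0 \<longrightarrow> norm (f h - u0) < e" if e: "e > 0" for e
  proof -
    have "eventually (\<lambda>d. dist (norm d) 0 < e) F" using lim e by (rule tendstoD)
    hence ev: "eventually (\<lambda>d. norm d < e) F" by simp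
    have "\<exists>d0\<in>D. eventually (\<lambda>d. norm d < e) (principal {e\<in>D. e \<le> d0})"
    proof -
      have "eventually (\<lambda>d. norm d < e) (INF d\<in>D. principal {e\<in>D. e \<le> d}) \<longleftrightarrow>
          (\<exists>d0\<in>D. eventually (\<lambda>d. norm d < e) (principal {e\<in>D. e \<le> d0}))"
      proof (rule eventually_INF_base[OF Dne])
        fix a1 a2 assume "a1 \<in> D" "a2 \<in> D"
        then obtain c where "c \<in> D" "c \<le> a1" "c \<le> a2" using dir by blast
        hence "{e \<in> D. e \<le> c} \<subseteq> {e \<in> D. e \<le> a1} \<inter> {e \<in> D. e \<le> a2}"
          using order_trans by blast
        hence "principal {e \<in> D. e \<le> c} \<le> inf (principal {e \<in> D. e \<le> a1}) (principal {e \<in> D. e \<le> a2})"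
          by (simp add: inf_principal)
        thus "\<exists>x\<in>D. principal {e \<in> D. e \<le> x} \<le> inf (principal {e \<in> D. e \<le> a1}) (principal {e \<in> D. e \<le> a2})"
          using \<open>c \<in> D\<close> by blast
      qed
      thus ?thesis using ev unfolding F_def by blast
    qed
    then obtain d0 where d0: "d0 \<in> D" "\<forall>d\<in>D. d \<le> d0 \<longrightarrow> norm d < e"
      by (auto simp: eventually_principal)
    then obtain h0 u0 where hu: "d0 = f h0 - u0" "h0 > 0" "u0 \<in> L" by (auto simp: D_def)
    have "norm (f h - u0) < e" if "0 < h" "h \<le> h0" for h
    proof -
      have "f h - u0 \<in> D" using that hu by (auto simp: D_def)
      moreover have "f h - u0 \<le> d0" using hu mono[OF that] by (simp add: diff_right_mono)
      ultimately show ?thesis using d0 by blast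
    qed
    thus ?thesis using hu by blast
  qed
  define g where "g n = f (1 / real (Suc n))" for n
  have "Cauchy g"
  proof (rule metric_CauchyI)
    fix e :: real assume "e > 0"
    then obtain h0 u0 where hu: "h0 > 0" "u0 \<in> L" "\<And>h. 0 < h \<Longrightarrow> h \<le> h0 \<Longrightarrow> norm (f h - u0) < e/2"
      using key[of "e/2"] by auto
    obtain N :: nat where N: "1 / real (Suc N) < h0" using hu(1)
      by (metis Suc_eq_plus1 nat_approx_posE)
    have small: "norm (g n - u0) < e/2" if "n \<ge> N" for n
    proof -
      have "1 / real (Suc n) \<le> 1 / real (Suc N)" using that by (simp add: frac_le)
      thus ?thesis unfolding g_def using N by (intro hu(3)) auto
    qed
    show "\<exists>M. \<forall>m\<ge>M. \<forall>n\<ge>M. dist (g m) (g n) < e"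
    proof (intro exI allI impI)
      fix m n assume "m \<ge> N" "n \<ge> N"
      have "dist (g m) (g n) = norm ((g m - u0) - (g n - u0))" by (simp add: dist_norm)
      also have "\<dots> \<le> norm (g m - u0) + norm (g n - u0)" by (rule norm_triangle_ineq4)
      also have "\<dots> < e" using small[OF \<open>m \<ge> N\<close>] small[OF \<open>n \<ge> N\<close>] by simp
      finally show "dist (g m) (g n) < e" .
    qed
  qed
  then obtain c where gc: "g \<longlonglongrightarrow> c" using Cauchy_convergent_iff convergent_def by blast
  have fc: "(f \<longlongrightarrow> c) (at_right 0)"
  proof (rule tendstoI)
    fix e :: real assume "e > 0"
    then obtain h0 u0 where hu: "h0 > 0" "u0 \<in> L" "\<And>h. 0 < h \<Longrightarrow> h \<le> h0 \<Longrightarrow> norm (f h - u0) < e/2"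
      using key[of "e/2"] by auto
    obtain N :: nat where N: "1 / real (Suc N) < h0" using hu(1)
      by (metis Suc_eq_plus1 nat_approx_posE)
    have "eventually (\<lambda>n. norm (g n - u0) \<le> e/2) sequentially"
    proof (rule eventually_sequentiallyI[of N])
      fix n assume "n \<ge> N"
      have "1 / real (Suc n) \<le> 1 / real (Suc N)" using \<open>n \<ge> N\<close> by (simp add: frac_le)
      thus "norm (g n - u0) \<le> e/2" unfolding g_def using N hu(3)[of "1 / real (Suc n)"] by auto
    qed
    moreover have "(\<lambda>n. norm (g n - u0)) \<longlonglongrightarrow> norm (c - u0)"
      by (intro tendsto_norm tendsto_diff gc tendsto_const)
    ultimately have cu: "norm (c - u0) \<le> e/2"
      by (intro tendsto_le[OF trivial_limit_sequentially tendsto_const]) 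
    have "eventually (\<lambda>h. 0 < h \<and> h < h0) (at_right (0::real))"
      unfolding eventually_at_right_field using hu(1) by blast
    thus "eventually (\<lambda>h. dist (f h) c < e) (at_right 0)"
    proof eventually_elim
      case (elim h)
      have "dist (f h) c = norm ((f h - u0) - (c - u0))" by (simp add: dist_norm)
      also have "\<dots> \<le> norm (f h - u0) + norm (c - u0)" by (rule norm_triangle_ineq4)
      also have "\<dots> < e" using hu(3)[of h] elim cu by simp
      finally show ?case .
    qed
  qed
  have "is_lat_inf (f ` {0<..}) c"
    unfolding is_lat_inf_def
  proof (intro conjI ballI allI impI)
    fix a assume "a \<in> f ` {0<..}"
    then obtain h where h: "h > 0" "a = f h" by auto
    have "eventually (\<lambda>h'. f h' \<le> f h) (at_right 0)"
      unfolding eventually_at_right_field using h(1) mono[of _ h] by (intro exI[of _ h]) auto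
    thus "c \<le> a" unfolding h(2) by (rule bl_lim_le[OF bl fc trivial_limit_at_right_real])
  next
    fix w assume "\<forall>a\<in>f ` {0<..}. w \<le> a"
    hence "eventually (\<lambda>h'. w \<le> f h') (at_right 0)"
      unfolding eventually_at_right_field by (intro exI[of _ 1]) auto
    thus "w \<le> c" by (rule bl_lim_ge[OF bl fc trivial_limit_at_right_real])
  qed
  thus ?thesis using fc by blast
qed

definition quot :: "('a::real_vector \<Rightarrow> 'a) \<Rightarrow> 'a \<Rightarrow> 'a \<Rightarrow> real \<Rightarrow> 'a" where
  "quot T x y h = (1 / h) *\<^sub>R (T (x + h *\<^sub>R y) - T x)"

lemma conv_step:
  fixes T :: "'a::ordered_real_vector \<Rightarrow> 'a"
  assumes cv: "convex_operator T" and l: "0 \<le> l" "l \<le> 1" and p: "p = l *\<^sub>R a + (1 - l) *\<^sub>R b"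
  shows "T p - T b \<le> l *\<^sub>R (T a - T b)"
proof -
  have "T p \<le> l *\<^sub>R T a + (1 - l) *\<^sub>R T b" unfolding p using cv l unfolding convex_operator_def by blast
  hence "T p - T b \<le> l *\<^sub>R T a + (1 - l) *\<^sub>R T b - T b" by (rule diff_right_mono)
  also have "l *\<^sub>R T a + (1 - l) *\<^sub>R T b - T b = l *\<^sub>R (T a - T b)" by (simp add: algebra_simps)
  finally show ?thesis .
qed

lemma quot_mono:
  fixes T :: "'a::ordered_real_vector \<Rightarrow> 'a"
  assumes cv: "convex_operator T" and h: "h1 < h2" "h1 \<noteq> 0" "h2 \<noteq> 0"
  shows "quot T x y h1 \<le> quot T x y h2"
proof -
  define A where "A = T (x + h1 *\<^sub>R y) - T x"
  define B where "B = T (x + h2 *\<^sub>R y) - T x"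
  have qA: "quot T x y h1 = (1/h1) *\<^sub>R A" by (simp add: quot_def A_def)
  have qB: "quot T x y h2 = (1/h2) *\<^sub>R B" by (simp add: quot_def B_def)
  consider "0 < h1" | "h1 < 0" "0 < h2" | "h2 < 0" using h by linarith
  thus ?thesis
  proof cases
    case 1
    define l where "l = h1 / h2"
    have l: "0 \<le> l" "l \<le> 1" using 1 h by (auto simp: l_def field_simps)
    have lh: "l * h2 = h1" using 1 h by (simp add: l_def)
    have "x + h1 *\<^sub>R y = l *\<^sub>R (x + h2 *\<^sub>R y) + (1 - l) *\<^sub>R x"
      by (simp add: algebra_simps lh[symmetric])
    hence "A \<le> l *\<^sub>R B" unfolding A_def B_def by (rule conv_step[OF cv l])
    hence "(1/h1) *\<^sub>R A \<le> (1/h1) *\<^sub>R (l *\<^sub>R B)" by (rule scaleR_left_mono) (use 1 in simp)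
    also have "(1/h1) *\<^sub>R (l *\<^sub>R B) = (1/h2) *\<^sub>R B" using 1 h by (simp add: l_def)
    finally show ?thesis unfolding qA qB .
  next
    case 3
    define l where "l = h2 / h1"
    have l: "0 \<le> l" "l \<le> 1" using 3 h by (auto simp: l_def field_simps)
    have lh: "l * h1 = h2" using 3 h by (simp add: l_def)
    have "x + h2 *\<^sub>R y = l *\<^sub>R (x + h1 *\<^sub>R y) + (1 - l) *\<^sub>R x"
      by (simp add: algebra_simps lh[symmetric])
    hence "B \<le> l *\<^sub>R A" unfolding A_def B_def by (rule conv_step[OF cv l])
    hence "(- 1/h2) *\<^sub>R B \<le> (- 1/h2) *\<^sub>R (l *\<^sub>R A)" by (rule scaleR_left_mono) (use 3 in simp)
    also have "(- 1/h2) *\<^sub>R (l *\<^sub>R A) = - ((1/h1) *\<^sub>R A)" using 3 h by (simp add: l_def)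
    also have "(- 1/h2) *\<^sub>R B = - ((1/h2) *\<^sub>R B)" by simp
    finally show ?thesis unfolding qA qB by (simp only: neg_le_iff_le)
  next
    case 2
    define l where "l = h2 / (h2 - h1)"
    have l: "0 \<le> l" "l \<le> 1" using 2 by (auto simp: l_def field_simps)
    have lh: "l * h1 + (1 - l) * h2 = 0" using 2 by (simp add: l_def field_simps)
    have "x = l *\<^sub>R (x + h1 *\<^sub>R y) + (1 - l) *\<^sub>R (x + h2 *\<^sub>R y)"
    proof -
      have "l *\<^sub>R (x + h1 *\<^sub>R y) + (1 - l) *\<^sub>R (x + h2 *\<^sub>R y) = x + (l * h1 + (1 - l) * h2) *\<^sub>R y"
        by (simp add: algebra_simps)
      thus ?thesis by (simp add: lh)
    qed
    hence "T x \<le> l *\<^sub>R T (x + h1 *\<^sub>R y) + (1 - l) *\<^sub>R T (x + h2 *\<^sub>R y)"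
      using cv l unfolding convex_operator_def by metis
    hence "0 \<le> l *\<^sub>R T (x + h1 *\<^sub>R y) + (1 - l) *\<^sub>R T (x + h2 *\<^sub>R y) - T x"
      by (simp only: diff_ge_0_iff_ge)
    also have "l *\<^sub>R T (x + h1 *\<^sub>R y) + (1 - l) *\<^sub>R T (x + h2 *\<^sub>R y) - T x = l *\<^sub>R A + (1 - l) *\<^sub>R B"
      by (simp add: A_def B_def algebra_simps)
    finally have "0 \<le> l *\<^sub>R A + (1 - l) *\<^sub>R B" .
    hence "((h2 - h1) / (- h1 * h2)) *\<^sub>R 0 \<le> ((h2 - h1) / (- h1 * h2)) *\<^sub>R (l *\<^sub>R A + (1 - l) *\<^sub>R B)"
    proof (rule scaleR_left_mono)
      have "0 < (- h1) * h2" using 2 by (intro mult_pos_pos) auto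
      moreover have "0 \<le> h2 - h1" using 2 by simp
      ultimately show "0 \<le> (h2 - h1) / (- h1 * h2)" by (metis divide_nonneg_pos mult_minus_left)
    qed
    also have "((h2 - h1) / (- h1 * h2)) *\<^sub>R (l *\<^sub>R A + (1 - l) *\<^sub>R B) = (1/h2) *\<^sub>R B - (1/h1) *\<^sub>R A"
    proof -
      have e1: "(h2 - h1) / (- h1 * h2) * l = - (1/h1)" using 2 by (simp add: l_def field_simps)
      have e2: "(h2 - h1) / (- h1 * h2) * (1 - l) = 1/h2" using 2 by (simp add: l_def field_simps)
      show ?thesis by (simp only: scaleR_add_right scaleR_scaleR e1 e2 scaleR_minus_left) (simp add: algebra_simps)
    qed
    finally have "0 \<le> (1/h2) *\<^sub>R B - (1/h1) *\<^sub>R A" by simp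
    thus ?thesis unfolding qA qB by (simp only: diff_ge_0_iff_ge)
  qed
qed

lemma lat_Inf_eq: "is_lat_inf A c \<Longrightarrow> lat_Inf A = c"
  unfolding lat_Inf_def
  by (rule the_equality) (auto simp: is_lat_inf_def intro: order.antisym)

lemma lat_Sup_eq: "is_lat_sup A c \<Longrightarrow> lat_Sup A = c"
  unfolding lat_Sup_def
  by (rule the_equality) (auto simp: is_lat_sup_def intro: order.antisym)

lemma plus_set: "{(1 / h) *\<^sub>R (T (x + h *\<^sub>R y) - T x) | h. h > 0} = quot T x y ` {0<..}"
  by (auto simp: quot_def)

lemma minus_set: "{(1 / h) *\<^sub>R (T (x + h *\<^sub>R y) - T x) | h. h < 0} = quot T x y ` {..<0}"
  by (auto simp: quot_def)

lemma quot_mono_le: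
  fixes T :: "'a::ordered_real_vector \<Rightarrow> 'a"
  assumes cv: "convex_operator T" and h: "h1 \<le> h2" "h1 \<noteq> 0" "h2 \<noteq> 0"
  shows "quot T x y h1 \<le> quot T x y h2"
proof (cases "h1 = h2")
  case True thus ?thesis by simp
next
  case False thus ?thesis using quot_mono[OF cv _ h(2,3)] h(1) by simp
qed

lemma deriv_plus:
  fixes T :: "'a::{banach,ordered_real_vector,lattice} \<Rightarrow> 'a"
  assumes bl: "banach_lattice TYPE('a)" and oc: "order_continuous_norm TYPE('a)"
    and cv: "convex_operator T"
  shows "is_lat_inf (quot T x y ` {0<..}) (lat_Inf (quot T x y ` {0<..})) \<and>
         (quot T x y \<longlongrightarrow> lat_Inf (quot T x y ` {0<..})) (at_right 0)"
proof -
  have "\<exists>c. is_lat_inf (quot T x y ` {0<..}) c \<and> (quot T x y \<longlongrightarrow> c) (at_right 0)"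
  proof (rule oc_mono_inf[OF bl oc])
    fix h1 h2 :: real assume "0 < h1" "h1 \<le> h2"
    thus "quot T x y h1 \<le> quot T x y h2" by (intro quot_mono_le[OF cv]) auto
  next
    fix h :: real assume "0 < h"
    thus "quot T x y (-1) \<le> quot T x y h" by (intro quot_mono_le[OF cv]) auto
  qed
  then obtain c where "is_lat_inf (quot T x y ` {0<..}) c" "(quot T x y \<longlongrightarrow> c) (at_right 0)" by blast
  thus ?thesis using lat_Inf_eq by metis
qed

lemma deriv_minus:
  fixes T :: "'a::{banach,ordered_real_vector,lattice} \<Rightarrow> 'a"
  assumes bl: "banach_lattice TYPE('a)" and oc: "order_continuous_norm TYPE('a)"
    and cv: "convex_operator T"
  shows "is_lat_sup (quot T x y ` {..<0}) (lat_Sup (quot T x y ` {..<0})) \<and>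
         ((\<lambda>h. quot T x y (- h)) \<longlongrightarrow> lat_Sup (quot T x y ` {..<0})) (at_right 0)"
proof -
  have "\<exists>c. is_lat_inf ((\<lambda>h. - quot T x y (- h)) ` {0<..}) c \<and> ((\<lambda>h. - quot T x y (- h)) \<longlongrightarrow> c) (at_right 0)"
  proof (rule oc_mono_inf[OF bl oc])
    fix h1 h2 :: real assume "0 < h1" "h1 \<le> h2"
    hence "quot T x y (- h2) \<le> quot T x y (- h1)" by (intro quot_mono_le[OF cv]) auto
    thus "- quot T x y (- h1) \<le> - quot T x y (- h2)" by (simp only: neg_le_iff_le)
  next
    fix h :: real assume "0 < h"
    hence "quot T x y (- h) \<le> quot T x y 1" by (intro quot_mono_le[OF cv]) auto
    thus "- quot T x y 1 \<le> - quot T x y (- h)" by (simp only: neg_le_iff_le)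
  qed
  then obtain c where c: "is_lat_inf ((\<lambda>h. - quot T x y (- h)) ` {0<..}) c"
    "((\<lambda>h. - quot T x y (- h)) \<longlongrightarrow> c) (at_right 0)" by blast
  have sup: "is_lat_sup (quot T x y ` {..<0}) (- c)"
    unfolding is_lat_sup_def
  proof (intro conjI ballI allI impI)
    fix a assume "a \<in> quot T x y ` {..<0}"
    then obtain h where h: "h < 0" "a = quot T x y h" by auto
    have mem: "- quot T x y h \<in> (\<lambda>h. - quot T x y (- h)) ` {0<..}"
      using h(1) by (intro image_eqI[of _ _ "- h"]) auto
    have "c \<le> - quot T x y h" using c(1) mem unfolding is_lat_inf_def by blast
    hence "c \<le> - a" using h(2) by simp
    thus "a \<le> - c" by (simp only: le_minus_iff)
  next
    fix w assume w: "\<forall>a\<in>quot T x y ` {..<0}. a \<le> w"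
    have "\<forall>a\<in>(\<lambda>h. - quot T x y (- h)) ` {0<..}. - w \<le> a"
    proof
      fix a assume "a \<in> (\<lambda>h. - quot T x y (- h)) ` {0<..}"
      then obtain h where h: "h > 0" "a = - quot T x y (- h)" by auto
      have "quot T x y (- h) \<le> w" using w h(1) by auto
      thus "- w \<le> a" unfolding h(2) by (simp only: neg_le_iff_le)
    qed
    hence "- w \<le> c" using c(1) unfolding is_lat_inf_def by blast
    thus "- c \<le> w" by (simp only: minus_le_iff)
  qed
  have "((\<lambda>h. - (- quot T x y (- h))) \<longlongrightarrow> - c) (at_right 0)" by (rule tendsto_minus[OF c(2)])
  hence "((\<lambda>h. quot T x y (- h)) \<longlongrightarrow> - c) (at_right 0)" by simp
  thus ?thesis using sup lat_Sup_eq by metis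
qed

lemma minus_le_plus:
  fixes T :: "'a::{banach,ordered_real_vector,lattice} \<Rightarrow> 'a"
  assumes bl: "banach_lattice TYPE('a)" and oc: "order_continuous_norm TYPE('a)"
    and cv: "convex_operator T"
  shows "lat_Sup (quot T x y ` {..<0}) \<le> lat_Inf (quot T x y ` {0<..})"
proof -
  have i: "is_lat_inf (quot T x y ` {0<..}) (lat_Inf (quot T x y ` {0<..}))"
    using deriv_plus[OF bl oc cv] by blast
  have s: "is_lat_sup (quot T x y ` {..<0}) (lat_Sup (quot T x y ` {..<0}))"
    using deriv_minus[OF bl oc cv] by blast
  have "\<forall>a\<in>quot T x y ` {..<0}. a \<le> lat_Inf (quot T x y ` {0<..})"
  proof
    fix a assume "a \<in> quot T x y ` {..<0}"
    then obtain h where h: "h < 0" "a = quot T x y h" by auto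
    have "\<forall>b\<in>quot T x y ` {0<..}. a \<le> b"
    proof
      fix b assume "b \<in> quot T x y ` {0<..}"
      then obtain k where k: "k > 0" "b = quot T x y k" by auto
      show "a \<le> b" unfolding h(2) k(2) using h(1) k(1) by (intro quot_mono_le[OF cv]) auto
    qed
    thus "a \<le> lat_Inf (quot T x y ` {0<..})" using i unfolding is_lat_inf_def by blast
  qed
  thus ?thesis using s unfolding is_lat_sup_def by blast
qed

lemma lower_le_minus:
  fixes T :: "'a::{banach,ordered_real_vector,lattice} \<Rightarrow> 'a"
  assumes bl: "banach_lattice TYPE('a)" and oc: "order_continuous_norm TYPE('a)"
    and cv: "convex_operator T" and h: "h > 0"
  shows "quot T x y (- h) \<le> lat_Sup (quot T x y ` {..<0})"
  using deriv_minus[OF bl oc cv] h unfolding is_lat_sup_def by auto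

lemma plus_le_upper:
  fixes T :: "'a::{banach,ordered_real_vector,lattice} \<Rightarrow> 'a"
  assumes bl: "banach_lattice TYPE('a)" and oc: "order_continuous_norm TYPE('a)"
    and cv: "convex_operator T" and h: "h > 0"
  shows "lat_Inf (quot T x y ` {0<..}) \<le> quot T x y h"
  using deriv_plus[OF bl oc cv] h unfolding is_lat_inf_def by auto

lemma lip_center:
  fixes T :: "'a::{banach,ordered_real_vector,lattice} \<Rightarrow> 'a"
  assumes bl: "banach_lattice TYPE('a)" and cv: "convex_operator T" and rho: "\<rho> > 0"
    and bnd: "\<And>v. norm (v - w) < \<rho> \<Longrightarrow> norm (T v) \<le> C"
    and d: "norm d \<le> \<rho> / 2"
  shows "norm (T (w + d) - T w) \<le> (8 * C / \<rho>) * norm d"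
proof (cases "d = 0")
  case True thus ?thesis by simp
next
  case False
  define l where "l = norm d / (\<rho> / 2)"
  have l0: "0 < l" using False rho by (simp add: l_def)
  have l1: "l \<le> 1" using d rho by (simp add: l_def)
  define e where "e = (1 / l) *\<^sub>R d"
  have le: "l *\<^sub>R e = d" using l0 by (simp add: e_def)
  have ne: "norm e = \<rho> / 2" using l0 rho False by (simp add: e_def l_def)
  have C1: "norm (T (w + e)) \<le> C" by (rule bnd) (use ne rho in simp)
  have C2: "norm (T (w - e)) \<le> C" by (rule bnd) (use ne rho in simp)
  have C3: "norm (T w) \<le> C" by (rule bnd) (use rho in simp)
  have "w + d = l *\<^sub>R (w + e) + (1 - l) *\<^sub>R w"
    by (simp add: algebra_simps le[symmetric])
  hence up: "T (w + d) - T w \<le> l *\<^sub>R (T (w + e) - T w)" by (rule conv_step[OF cv less_imp_le[OF l0] l1])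
  have "w - d = l *\<^sub>R (w - e) + (1 - l) *\<^sub>R w"
    by (simp add: algebra_simps le[symmetric])
  hence dn: "T (w - d) - T w \<le> l *\<^sub>R (T (w - e) - T w)" by (rule conv_step[OF cv less_imp_le[OF l0] l1])
  have wm: "w = (1/2::real) *\<^sub>R (w + d) + (1 - 1/2) *\<^sub>R (w - d)"
    by (simp add: algebra_simps scaleR_2[symmetric])
  have mid: "T w - T (w - d) \<le> (1/2::real) *\<^sub>R (T (w + d) - T (w - d))" by (rule conv_step[OF cv _ _ wm]) simp_all
  hence "(2::real) *\<^sub>R (T w - T (w - d)) \<le> (2::real) *\<^sub>R ((1/2::real) *\<^sub>R (T (w + d) - T (w - d)))"
    by (rule scaleR_left_mono) simp
  hence "(2::real) *\<^sub>R (T w - T (w - d)) \<le> T (w + d) - T (w - d)" by simp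
  hence "0 \<le> (T (w + d) - T (w - d)) - (2::real) *\<^sub>R (T w - T (w - d))" by (simp only: diff_ge_0_iff_ge)
  also have "(T (w + d) - T (w - d)) - (2::real) *\<^sub>R (T w - T (w - d)) = (T (w + d) - T w) - (T w - T (w - d))"
    by (simp add: algebra_simps scaleR_2)
  finally have m2: "T w - T (w - d) \<le> T (w + d) - T w" by (simp only: diff_ge_0_iff_ge)
  have "- (l *\<^sub>R (T (w - e) - T w)) \<le> - (T (w - d) - T w)" using dn by (simp only: neg_le_iff_le)
  also have "- (T (w - d) - T w) = T w - T (w - d)" by simp
  finally have lo: "- (l *\<^sub>R (T (w - e) - T w)) \<le> T (w + d) - T w" using m2 by (rule order_trans)
  have "norm (T (w + d) - T w) \<le> norm (- (l *\<^sub>R (T (w - e) - T w))) + norm (l *\<^sub>R (T (w + e) - T w))"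
    by (rule bl_sandwich[OF bl lo up])
  also have "\<dots> = l * norm (T (w - e) - T w) + l * norm (T (w + e) - T w)" using l0 by simp
  also have "\<dots> \<le> l * (2 * C) + l * (2 * C)"
  proof -
    have "norm (T (w - e) - T w) \<le> 2 * C" using C2 C3 norm_triangle_ineq4[of "T (w - e)" "T w"] by linarith
    moreover have "norm (T (w + e) - T w) \<le> 2 * C" using C1 C3 norm_triangle_ineq4[of "T (w + e)" "T w"] by linarith
    ultimately show ?thesis using l0 by (intro add_mono mult_left_mono) auto
  qed
  also have "\<dots> = (8 * C / \<rho>) * norm d" using rho by (simp add: l_def field_simps)
  finally show ?thesis .
qed

lemma lip_isCont:
  fixes T :: "'a::real_normed_vector \<Rightarrow> 'b::real_normed_vector"
  assumes r: "r > 0" and K: "K \<ge> 0" and lip: "\<And>d. norm d \<le> r \<Longrightarrow> norm (T (w + d) - T w) \<le> K * norm d"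
  shows "isCont T w"
  unfolding isCont_def
proof (rule tendstoI)
  fix e :: real assume e: "e > 0"
  show "eventually (\<lambda>v. dist (T v) (T w) < e) (at w)"
    unfolding eventually_at
  proof (intro exI[of _ "min r (e / (K + 1))"] conjI ballI impI)
    show "0 < min r (e / (K + 1))" using r e K by simp
    fix v assume "v \<in> UNIV" and v: "v \<noteq> w \<and> dist v w < min r (e / (K + 1))"
    have "norm (T (w + (v - w)) - T w) \<le> K * norm (v - w)" by (rule lip) (use v in \<open>simp add: dist_norm\<close>)
    also have "\<dots> \<le> K * (e / (K + 1))" using v K by (intro mult_left_mono) (auto simp: dist_norm)
    also have "\<dots> < e" using K e by (simp add: field_simps)
    finally show "dist (T v) (T w) < e" by (simp add: dist_norm)
  qed
qed

lemma convex_cont: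
  fixes T :: "'a::{banach,ordered_real_vector,lattice} \<Rightarrow> 'a"
  assumes bl: "banach_lattice TYPE('a)" and cv: "convex_operator T" and bd: "bounded_operator T"
  shows "isCont T w"
proof -
  obtain C where C: "\<And>x. norm x \<le> norm w + 1 \<Longrightarrow> norm (T x) \<le> C"
    using bd unfolding bounded_operator_def
    by (metis add_nonneg_pos norm_ge_zero zero_less_one)
  have bnd: "norm (T v) \<le> C" if "norm (v - w) < 1" for v
  proof (rule C)
    have "norm v \<le> norm (v - w) + norm w" using norm_triangle_ineq2[of v w] by linarith
    thus "norm v \<le> norm w + 1" using that by linarith
  qed
  have C0: "0 \<le> C" using bnd[of w] by (simp add: order_trans[OF norm_ge_zero])
  show ?thesis
  proof (rule lip_isCont[of "1/2" "8 * C / 1"])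
    show "0 < (1/2::real)" by simp
    show "0 \<le> 8 * C / 1" using C0 by simp
    fix d :: 'a assume "norm d \<le> 1/2"
    thus "norm (T (w + d) - T w) \<le> 8 * C / 1 * norm d"
      by (intro lip_center[OF bl cv, of 1 w C]) (auto intro: bnd)
  qed
qed

lemma half_norm: "norm ((1/2::real) *\<^sub>R X + (1/2::real) *\<^sub>R Y) \<le> (1/2) * norm X + (1/2) * norm Y"
  using norm_triangle_ineq[of "(1/2::real) *\<^sub>R X" "(1/2::real) *\<^sub>R Y"] by simp

lemma convex_ubp:
  fixes T :: "nat \<Rightarrow> 'a::{banach,ordered_real_vector,lattice} \<Rightarrow> 'a"
  assumes bl: "banach_lattice TYPE('a)" and cv: "\<And>n. convex_operator (T n)"
    and ct: "\<And>n v. isCont (T n) v" and pb: "\<And>v. \<exists>M. \<forall>n. norm (T n v) \<le> M"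
  shows "\<exists>\<rho>>0. \<exists>C. \<forall>n v. norm (v - w) < \<rho> \<longrightarrow> norm (T n v) \<le> C"
proof -
  define F where "F k = {v. \<forall>n. norm (T n v) \<le> real k}" for k :: nat
  have clF: "closed (F k)" for k
    unfolding F_def
  proof (rule closed_Collect_all)
    fix n
    have "continuous_on UNIV (\<lambda>v. norm (T n v))"
      by (intro continuous_on_norm continuous_at_imp_continuous_on ballI ct)
    thus "closed {v. norm (T n v) \<le> real k}"
      by (rule closed_Collect_le) (rule continuous_on_const)
  qed
  have cov: "\<Union>(range F) = UNIV"
  proof (intro set_eqI iffI)
    fix v :: 'a
    obtain M where M: "\<forall>n. norm (T n v) \<le> M" using pb by blast
    obtain k :: nat where "M \<le> real k" using real_arch_simple by blast
    hence "v \<in> F k" using M unfolding F_def by (auto intro: order_trans)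
    thus "v \<in> \<Union>(range F)" by blast
  qed simp
  have "\<exists>k. interior (F k) \<noteq> {}"
  proof (rule ccontr)
    assume "\<not> (\<exists>k. interior (F k) \<noteq> {})"
    hence "euclidean interior_of \<Union>(range F) = {}"
      by (intro Baire_category_alt) (auto simp: completely_metrizable_space_euclidean clF closed_closedin[symmetric])
    thus False using cov by simp
  qed
  then obtain k a where "a \<in> interior (F k)" by blast
  then obtain \<rho>0 where r0: "\<rho>0 > 0" "ball a \<rho>0 \<subseteq> F k" by (auto simp: mem_interior)
  define b where "b = (2::real) *\<^sub>R w - a"
  obtain Mb where Mb: "\<And>n. norm (T n b) \<le> Mb" using pb by blast
  obtain Mw where Mw: "\<And>n. norm (T n w) \<le> Mw" using pb by blast
  define U where "U n v = (1/2::real) *\<^sub>R T n b + (1/2::real) *\<^sub>R T n (a + (2::real) *\<^sub>R (v - w))" for n v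
  have Uge: "T n v \<le> U n v" and Un: "norm (U n v) \<le> (1/2) * Mb + (1/2) * real k"
    if v: "norm (v - w) < \<rho>0 / 2" for n v
  proof -
    have vm: "(1/2::real) *\<^sub>R b + (1 - 1/2) *\<^sub>R (a + (2::real) *\<^sub>R (v - w)) = v"
      by (simp add: b_def algebra_simps)
    have "T n ((1/2::real) *\<^sub>R b + (1 - 1/2) *\<^sub>R (a + (2::real) *\<^sub>R (v - w)))
        \<le> (1/2::real) *\<^sub>R T n b + (1 - 1/2) *\<^sub>R T n (a + (2::real) *\<^sub>R (v - w))"
      by (rule cv[of n, unfolded convex_operator_def, rule_format]) simp
    moreover have "(1 - 1/2::real) = 1/2" by simp
    ultimately show "T n v \<le> U n v" unfolding U_def vm by simp
    have "dist a (a + (2::real) *\<^sub>R (v - w)) < \<rho>0" using v by (simp add: dist_norm)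
    hence "a + (2::real) *\<^sub>R (v - w) \<in> F k" using r0(2) by auto
    hence "norm (T n (a + (2::real) *\<^sub>R (v - w))) \<le> real k" unfolding F_def by blast
    thus "norm (U n v) \<le> (1/2) * Mb + (1/2) * real k"
      unfolding U_def using half_norm[of "T n b" "T n (a + (2::real) *\<^sub>R (v - w))"] Mb[of n] by linarith
  qed
  show ?thesis
  proof (intro exI conjI allI impI)
    show "0 < \<rho>0 / 2" using r0 by simp
    fix n v assume v: "norm (v - w) < \<rho>0 / 2"
    have "(2::real) *\<^sub>R w - v - w = - (v - w)" by (simp add: algebra_simps scaleR_2)
    hence v': "norm ((2::real) *\<^sub>R w - v - w) < \<rho>0 / 2" using v by (simp only: norm_minus_cancel)
    have wm: "(1/2::real) *\<^sub>R v + (1 - 1/2) *\<^sub>R ((2::real) *\<^sub>R w - v) = w"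
      by (simp add: algebra_simps)
    have "T n ((1/2::real) *\<^sub>R v + (1 - 1/2) *\<^sub>R ((2::real) *\<^sub>R w - v)) \<le> (1/2::real) *\<^sub>R T n v + (1 - 1/2) *\<^sub>R T n ((2::real) *\<^sub>R w - v)"
      by (rule cv[of n, unfolded convex_operator_def, rule_format]) simp
    hence "T n w \<le> (1/2::real) *\<^sub>R T n v + (1 - 1/2) *\<^sub>R T n ((2::real) *\<^sub>R w - v)"
      unfolding wm .
    hence "(2::real) *\<^sub>R T n w \<le> (2::real) *\<^sub>R ((1/2::real) *\<^sub>R T n v + (1 - 1/2) *\<^sub>R T n ((2::real) *\<^sub>R w - v))"
      by (rule scaleR_left_mono) simp
    also have "\<dots> = T n v + T n ((2::real) *\<^sub>R w - v)" by (simp add: algebra_simps)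
    finally have "(2::real) *\<^sub>R T n w - T n ((2::real) *\<^sub>R w - v) \<le> T n v" by (simp only: diff_le_eq)
    moreover have "(2::real) *\<^sub>R T n w - U n ((2::real) *\<^sub>R w - v) \<le> (2::real) *\<^sub>R T n w - T n ((2::real) *\<^sub>R w - v)"
      using Uge[OF v'] by (rule diff_left_mono)
    ultimately have lo: "(2::real) *\<^sub>R T n w - U n ((2::real) *\<^sub>R w - v) \<le> T n v" by (rule order_trans[rotated])
    have "norm (T n v) \<le> norm ((2::real) *\<^sub>R T n w - U n ((2::real) *\<^sub>R w - v)) + norm (U n v)"
      by (rule bl_sandwich[OF bl lo Uge[OF v]])
    also have "\<dots> \<le> (2 * Mw + ((1/2) * Mb + (1/2) * real k)) + ((1/2) * Mb + (1/2) * real k)"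
    proof (rule add_mono)
      have "norm ((2::real) *\<^sub>R T n w - U n ((2::real) *\<^sub>R w - v)) \<le> norm ((2::real) *\<^sub>R T n w) + norm (U n ((2::real) *\<^sub>R w - v))"
        by (rule norm_triangle_ineq4)
      also have "\<dots> \<le> 2 * Mw + ((1/2) * Mb + (1/2) * real k)"
        using Mw[of n] Un[OF v', of n] by simp
      finally show "norm ((2::real) *\<^sub>R T n w - U n ((2::real) *\<^sub>R w - v)) \<le> 2 * Mw + ((1/2) * Mb + (1/2) * real k)" .
      show "norm (U n v) \<le> (1/2) * Mb + (1/2) * real k" by (rule Un[OF v])
    qed
    finally show "norm (T n v) \<le> (2 * Mw + ((1/2) * Mb + (1/2) * real k)) + ((1/2) * Mb + (1/2) * real k)" .
  qed
qed

lemma sg_comp: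
  assumes sg: "convex_C0_semigroup S" and "a \<ge> 0" "b \<ge> 0"
  shows "S (a + b) z = S a (S b z)"
  using sg assms unfolding convex_C0_semigroup_def by simp

lemma sg_props:
  assumes sg: "convex_C0_semigroup S" and "t \<ge> 0"
  shows "convex_operator (S t)" "bounded_operator (S t)"
  using sg assms unfolding convex_C0_semigroup_def by auto

lemma sg_id: "convex_C0_semigroup S \<Longrightarrow> S 0 z = z"
  unfolding convex_C0_semigroup_def by simp

lemma sg_right0:
  fixes S :: "real \<Rightarrow> 'a::{real_normed_vector,ordered_real_vector} \<Rightarrow> 'a"
  assumes sg: "convex_C0_semigroup S" and e: "e > 0"
  shows "\<exists>\<delta>>0. \<forall>r. 0 \<le> r \<and> r < \<delta> \<longrightarrow> norm (S r v - v) < e"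
proof -
  have "((\<lambda>t. S t v) \<longlongrightarrow> v) (at_right 0)" using sg unfolding convex_C0_semigroup_def by blast
  hence "eventually (\<lambda>t. dist (S t v) v < e) (at_right 0)" using e by (rule tendstoD)
  then obtain b where b: "b > 0" "\<And>y. y > 0 \<Longrightarrow> y < b \<Longrightarrow> dist (S y v) v < e"
    unfolding eventually_at_right_field by auto
  show ?thesis
  proof (intro exI[of _ b] conjI allI impI)
    show "b > 0" by fact
    fix r :: real assume r: "0 \<le> r \<and> r < b"
    show "norm (S r v - v) < e"
    proof (cases "r = 0")
      case True thus ?thesis using sg_id[OF sg] e by simp
    next
      case False thus ?thesis using b(2)[of r] r by (simp add: dist_norm)
    qed
  qed
qed

lemma local_ubp:
  fixes S :: "real \<Rightarrow> 'a::{banach,ordered_real_vector,lattice} \<Rightarrow> 'a"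
  assumes bl: "banach_lattice TYPE('a)" and sg: "convex_C0_semigroup S"
  shows "\<exists>\<delta>>0. \<exists>\<rho>>0. \<exists>C. \<forall>\<tau> v. 0 \<le> \<tau> \<and> \<tau> \<le> \<delta> \<and> norm (v - w) < \<rho> \<longrightarrow> norm (S \<tau> v) \<le> C"
proof (rule ccontr)
  assume H: "\<not> ?thesis"
  have "\<forall>n::nat. \<exists>p. 0 \<le> fst p \<and> fst p \<le> 1 / real (Suc n) \<and> norm (snd p - w) < 1 / real (Suc n)
      \<and> real n < norm (S (fst p) (snd p))"
  proof
    fix n :: nat
    have pos: "1 / real (Suc n) > 0" by simp
    have "\<not> (\<forall>\<tau> v. 0 \<le> \<tau> \<and> \<tau> \<le> 1 / real (Suc n) \<and> norm (v - w) < 1 / real (Suc n) \<longrightarrow> norm (S \<tau> v) \<le> real n)"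
    proof
      assume A: "\<forall>\<tau> v. 0 \<le> \<tau> \<and> \<tau> \<le> 1 / real (Suc n) \<and> norm (v - w) < 1 / real (Suc n) \<longrightarrow> norm (S \<tau> v) \<le> real n"
      have "\<exists>\<delta>>0. \<exists>\<rho>>0. \<exists>C. \<forall>\<tau> v. 0 \<le> \<tau> \<and> \<tau> \<le> \<delta> \<and> norm (v - w) < \<rho> \<longrightarrow> norm (S \<tau> v) \<le> C"
        using pos A by blast
      with H show False by blast
    qed
    then obtain \<tau> v where "0 \<le> \<tau>" "\<tau> \<le> 1 / real (Suc n)" "norm (v - w) < 1 / real (Suc n)"
      "\<not> norm (S \<tau> v) \<le> real n" by blast
    thus "\<exists>p. 0 \<le> fst p \<and> fst p \<le> 1 / real (Suc n) \<and> norm (snd p - w) < 1 / real (Suc n)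
      \<and> real n < norm (S (fst p) (snd p))" by (intro exI[of _ "(\<tau>, v)"]) simp
  qed
  then obtain p where p: "\<And>n. 0 \<le> fst (p n) \<and> fst (p n) \<le> 1 / real (Suc n) \<and> norm (snd (p n) - w) < 1 / real (Suc n)
      \<and> real n < norm (S (fst (p n)) (snd (p n)))"
    by (metis choice)
  define \<tau> where "\<tau> n = fst (p n)" for n
  define vv where "vv n = snd (p n)" for n
  have \<tau>0: "0 \<le> \<tau> n" for n using p[of n] by (simp add: \<tau>_def)
  have \<tau>1: "\<tau> n \<le> 1 / real (Suc n)" for n using p[of n] by (simp add: \<tau>_def)
  have vv1: "norm (vv n - w) < 1 / real (Suc n)" for n using p[of n] by (simp add: vv_def)
  have big: "real n < norm (S (\<tau> n) (vv n))" for n using p[of n] by (simp add: vv_def \<tau>_def)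
  have "\<exists>\<rho>>0. \<exists>C. \<forall>n v. norm (v - w) < \<rho> \<longrightarrow> norm (S (\<tau> n) v) \<le> C"
  proof (rule convex_ubp[OF bl])
    fix n show "convex_operator (S (\<tau> n))" using sg_props[OF sg \<tau>0] by blast
  next
    fix n v show "isCont (S (\<tau> n)) v" using sg_props[OF sg \<tau>0] by (intro convex_cont[OF bl]) auto
  next
    fix v
    obtain \<delta>1 where d1: "\<delta>1 > 0" "\<And>r. 0 \<le> r \<and> r < \<delta>1 \<Longrightarrow> norm (S r v - v) < 1"
      using sg_right0[OF sg, of 1 v] by auto
    obtain N :: nat where N: "1 / real (Suc N) < \<delta>1" using d1(1) by (rule nat_approx_posE)
    define M where "M = norm v + 1 + (\<Sum>m<N. norm (S (\<tau> m) v))"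
    have s0: "0 \<le> (\<Sum>m<N. norm (S (\<tau> m) v))" by (rule sum_nonneg) simp
    show "\<exists>M. \<forall>n. norm (S (\<tau> n) v) \<le> M"
    proof (intro exI[of _ M] allI)
      fix n
      show "norm (S (\<tau> n) v) \<le> M"
      proof (cases "n < N")
        case True
        have "norm (S (\<tau> n) v) \<le> (\<Sum>m<N. norm (S (\<tau> m) v))"
          by (rule member_le_sum) (use True in auto)
        moreover have "0 \<le> norm v" by simp
        ultimately show ?thesis unfolding M_def by linarith
      next
        case False
        have "1 / real (Suc n) \<le> 1 / real (Suc N)" using False by (simp add: frac_le)
        hence "\<tau> n < \<delta>1" using \<tau>1[of n] N by linarith
        hence "norm (S (\<tau> n) v - v) < 1" using d1(2) \<tau>0 by blast
        hence "norm (S (\<tau> n) v) < norm v + 1" using norm_triangle_ineq2[of "S (\<tau> n) v" v] by linarith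
        thus ?thesis using s0 unfolding M_def by linarith
      qed
    qed
  qed
  then obtain \<rho> C where rC: "\<rho> > 0" "\<And>n v. norm (v - w) < \<rho> \<Longrightarrow> norm (S (\<tau> n) v) \<le> C" by blast
  obtain N1 :: nat where N1: "1 / real (Suc N1) < \<rho>" using rC(1) by (rule nat_approx_posE)
  obtain k :: nat where k: "C \<le> real k" using real_arch_simple by blast
  define n where "n = max N1 k"
  have "1 / real (Suc n) \<le> 1 / real (Suc N1)" by (simp add: n_def frac_le)
  hence "norm (vv n - w) < \<rho>" using vv1[of n] N1 by linarith
  hence "norm (S (\<tau> n) (vv n)) \<le> C" by (rule rC(2))
  moreover have "C \<le> real n" using k by (simp add: n_def)
  ultimately show False using big[of n] by linarith
qed

lemma orbit_cont:
  fixes S :: "real \<Rightarrow> 'a::{banach,ordered_real_vector,lattice} \<Rightarrow> 'a"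
  assumes bl: "banach_lattice TYPE('a)" and sg: "convex_C0_semigroup S" and t: "t \<ge> 0"
  shows "((\<lambda>s. S s w) \<longlongrightarrow> S t w) (at t within {0..})"
proof (rule tendstoI)
  fix e :: real assume e: "e > 0"
  obtain \<delta>2 where d2: "\<delta>2 > 0" "\<And>r. 0 \<le> r \<and> r < \<delta>2 \<Longrightarrow> norm (S r (S t w) - S t w) < e"
    using sg_right0[OF sg e, of "S t w"] by auto
  have right: "dist (S s w) (S t w) < e" if "t < s" "s - t < \<delta>2" for s
  proof -
    have "S s w = S (s - t) (S t w)" using sg_comp[OF sg, of "s - t" t w] that t by simp
    thus ?thesis using d2(2)[of "s - t"] that by (simp add: dist_norm)
  qed
  show "eventually (\<lambda>s. dist (S s w) (S t w) < e) (at t within {0..})"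
  proof (cases "t = 0")
    case True
    show ?thesis unfolding eventually_at
    proof (intro exI[of _ \<delta>2] conjI ballI impI)
      show "\<delta>2 > 0" by fact
      fix s assume "s \<in> {0..}" "s \<noteq> t \<and> dist s t < \<delta>2"
      thus "dist (S s w) (S t w) < e" using True by (intro right) (auto simp: dist_real_def)
    qed
  next
    case False
    hence tp: "t > 0" using t by simp
    obtain \<delta> \<rho> C where loc: "\<delta> > 0" "\<rho> > 0"
      "\<And>\<tau> v. 0 \<le> \<tau> \<Longrightarrow> \<tau> \<le> \<delta> \<Longrightarrow> norm (v - w) < \<rho> \<Longrightarrow> norm (S \<tau> v) \<le> C"
      using local_ubp[OF bl sg, of w] by blast
    have C0: "0 \<le> C" using loc(3)[of 0 w] loc(1,2) by (simp add: order_trans[OF norm_ge_zero])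
    define K where "K = 8 * C / \<rho>"
    have K0: "0 \<le> K" using C0 loc(2) by (simp add: K_def)
    define \<epsilon>0 where "\<epsilon>0 = min \<delta> t"
    have e0: "0 < \<epsilon>0" "\<epsilon>0 \<le> \<delta>" "\<epsilon>0 \<le> t" using loc(1) tp by (auto simp: \<epsilon>0_def)
    define z0 where "z0 = S \<epsilon>0 w"
    have z0t: "S (t - \<epsilon>0) z0 = S t w" using sg_comp[OF sg, of "t - \<epsilon>0" \<epsilon>0 w] e0 by (simp add: z0_def)
    have "isCont (S (t - \<epsilon>0)) z0" using sg_props[OF sg, of "t - \<epsilon>0"] e0 by (intro convex_cont[OF bl]) auto
    hence "eventually (\<lambda>z. dist (S (t - \<epsilon>0) z) (S (t - \<epsilon>0) z0) < e) (at z0)"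
      unfolding isCont_def using e by (rule tendstoD)
    then obtain \<eta> where eta: "\<eta> > 0" "\<And>z. z \<noteq> z0 \<Longrightarrow> dist z z0 < \<eta> \<Longrightarrow> dist (S (t - \<epsilon>0) z) (S t w) < e"
      unfolding eventually_at z0t by auto
    have eta': "dist (S (t - \<epsilon>0) z) (S t w) < e" if "dist z z0 < \<eta>" for z
      using eta(2)[OF _ that] z0t e by (cases "z = z0") auto
    have mpos: "min (\<rho> / 2) (\<eta> / (K + 1)) > 0" using loc(2) eta(1) K0 by simp
    obtain \<delta>1 where d1: "\<delta>1 > 0" "\<And>r. 0 \<le> r \<and> r < \<delta>1 \<Longrightarrow> norm (S r w - w) < min (\<rho> / 2) (\<eta> / (K + 1))"
      using sg_right0[OF sg mpos, of w] by auto
    have left: "dist (S s w) (S t w) < e" if s: "s < t" "t - s < \<delta>1" "t - s < \<epsilon>0" for s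
    proof -
      define r where "r = t - s"
      define \<sigma> where "\<sigma> = \<epsilon>0 - r"
      have r: "0 < r" "r < \<delta>1" "r < \<epsilon>0" using s by (auto simp: r_def)
      have \<sigma>: "0 < \<sigma>" "\<sigma> \<le> \<delta>" using r e0 by (auto simp: \<sigma>_def)
      have eq1: "S s w = S (t - \<epsilon>0) (S \<sigma> w)"
        using sg_comp[OF sg, of "t - \<epsilon>0" \<sigma> w] e0 \<sigma> by (simp add: \<sigma>_def r_def)
      have eq2: "S \<sigma> (S r w) = z0"
        using sg_comp[OF sg, of \<sigma> r w] r \<sigma> by (simp add: \<sigma>_def z0_def)
      have nr: "norm (S r w - w) < min (\<rho> / 2) (\<eta> / (K + 1))" using d1(2) r by auto
      have "norm (S \<sigma> (w + (S r w - w)) - S \<sigma> w) \<le> K * norm (S r w - w)"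
        unfolding K_def
      proof (rule lip_center[OF bl _ loc(2)])
        show "convex_operator (S \<sigma>)" using sg_props[OF sg, of \<sigma>] \<sigma> by auto
        fix v assume "norm (v - w) < \<rho>" thus "norm (S \<sigma> v) \<le> C" using loc(3)[of \<sigma> v] \<sigma> by auto
      next
        show "norm (S r w - w) \<le> \<rho> / 2" using nr by linarith
      qed
      also have "\<dots> \<le> K * (\<eta> / (K + 1))" using nr K0 by (intro mult_left_mono) auto
      also have "\<dots> < \<eta>" using K0 eta(1) by (simp add: field_simps)
      finally have "dist (S \<sigma> w) z0 < \<eta>" using eq2 by (simp add: dist_norm norm_minus_commute)
      hence "dist (S (t - \<epsilon>0) (S \<sigma> w)) (S t w) < e" by (rule eta')
      thus ?thesis using eq1 by simp
    qed
    show ?thesis unfolding eventually_at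
    proof (intro exI[of _ "min \<delta>2 (min \<delta>1 \<epsilon>0)"] conjI ballI impI)
      show "0 < min \<delta>2 (min \<delta>1 \<epsilon>0)" using d2(1) d1(1) e0(1) by simp
      fix s assume "s \<in> {0..}" and s: "s \<noteq> t \<and> dist s t < min \<delta>2 (min \<delta>1 \<epsilon>0)"
      show "dist (S s w) (S t w) < e"
      proof (cases "s < t")
        case True thus ?thesis using s by (intro left) (auto simp: dist_real_def)
      next
        case False thus ?thesis using s by (intro right) (auto simp: dist_real_def)
      qed
    qed
  qed
qed

lemma dd_plus_eq: "dir_deriv_plus S s x y = lat_Inf (quot (S s) x y ` {0<..})"
  unfolding dir_deriv_plus_def plus_set ..

lemma dd_minus_eq: "dir_deriv_minus S s x y = lat_Sup (quot (S s) x y ` {..<0})"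
  unfolding dir_deriv_minus_def minus_set ..

lemma quot_cont:
  fixes S :: "real \<Rightarrow> 'a::{banach,ordered_real_vector,lattice} \<Rightarrow> 'a"
  assumes bl: "banach_lattice TYPE('a)" and sg: "convex_C0_semigroup S" and t: "t \<ge> 0"
  shows "((\<lambda>s. quot (S s) x y h) \<longlongrightarrow> quot (S t) x y h) (at t within {0..})"
  unfolding quot_def
  by (intro tendsto_scaleR tendsto_const tendsto_diff orbit_cont[OF bl sg t])

lemma cont_at:
  fixes S :: "real \<Rightarrow> 'a::{banach,ordered_real_vector,lattice} \<Rightarrow> 'a"
  assumes bl: "banach_lattice TYPE('a)" and oc: "order_continuous_norm TYPE('a)"
    and sg: "convex_C0_semigroup S" and t: "t \<ge> 0"
    and hyp: "dir_deriv_plus S t x y = dir_deriv_minus S t x y"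
  shows "((\<lambda>s. dir_deriv_plus S s x y) \<longlongrightarrow> dir_deriv_plus S t x y) (at t within {0..}) \<and>
         ((\<lambda>s. dir_deriv_minus S s x y) \<longlongrightarrow> dir_deriv_minus S t x y) (at t within {0..})"
proof -
  define c where "c = dir_deriv_plus S t x y"
  have cvt: "convex_operator (S t)" using sg_props[OF sg t] by blast
  have lp: "(quot (S t) x y \<longlongrightarrow> c) (at_right 0)"
    using deriv_plus[OF bl oc cvt, of x y] unfolding c_def dd_plus_eq by blast
  have lm: "((\<lambda>h. quot (S t) x y (- h)) \<longlongrightarrow> c) (at_right 0)"
    using deriv_minus[OF bl oc cvt, of x y] hyp unfolding c_def dd_minus_eq dd_plus_eq by simp
  have sand: "dir_deriv_minus S s x y \<le> dir_deriv_plus S s x y \<and>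
      quot (S s) x y (- h) \<le> dir_deriv_minus S s x y \<and> dir_deriv_plus S s x y \<le> quot (S s) x y h"
    if "0 \<le> s" "0 < h" for s h
  proof -
    have cv: "convex_operator (S s)" using sg_props[OF sg that(1)] by blast
    show ?thesis unfolding dd_plus_eq dd_minus_eq
      using minus_le_plus[OF bl oc cv] lower_le_minus[OF bl oc cv that(2)] plus_le_upper[OF bl oc cv that(2)]
      by blast
  qed
  have main: "eventually (\<lambda>s. dist (dir_deriv_plus S s x y) c < e \<and> dist (dir_deriv_minus S s x y) c < e)
      (at t within {0..})" if e: "e > 0" for e
  proof -
    have "eventually (\<lambda>h. dist (quot (S t) x y h) c < e/4 \<and> dist (quot (S t) x y (- h)) c < e/4) (at_right 0)"
      using tendstoD[OF lp, of "e/4"] tendstoD[OF lm, of "e/4"] e by (auto intro: eventually_conj)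
    then obtain b where b: "b > 0" "\<And>h. h > 0 \<Longrightarrow> h < b \<Longrightarrow> dist (quot (S t) x y h) c < e/4 \<and> dist (quot (S t) x y (- h)) c < e/4"
      unfolding eventually_at_right_field by auto
    define h where "h = b / 2"
    have h: "h > 0" "dist (quot (S t) x y h) c < e/4" "dist (quot (S t) x y (- h)) c < e/4"
      using b by (auto simp: h_def)
    have ev0: "eventually (\<lambda>s. 0 \<le> s) (at t within {0..})"
      unfolding eventually_at by (intro exI[of _ 1]) auto
    have ev1: "eventually (\<lambda>s. dist (quot (S s) x y h) (quot (S t) x y h) < e/4) (at t within {0..})"
      using e by (intro tendstoD[OF quot_cont[OF bl sg t]]) simp
    have ev2: "eventually (\<lambda>s. dist (quot (S s) x y (- h)) (quot (S t) x y (- h)) < e/4) (at t within {0..})"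
      using e by (intro tendstoD[OF quot_cont[OF bl sg t]]) simp
    show ?thesis using ev0 ev1 ev2
    proof eventually_elim
      case (elim s)
      have na: "norm (quot (S s) x y (- h) - c) < e/2"
        using elim(3) h(3) dist_triangle[of "quot (S s) x y (- h)" c "quot (S t) x y (- h)"]
        by (simp add: dist_norm)
      have nb: "norm (quot (S s) x y h - c) < e/2"
        using elim(2) h(2) dist_triangle[of "quot (S s) x y h" c "quot (S t) x y h"]
        by (simp add: dist_norm)
      have sd: "dir_deriv_minus S s x y \<le> dir_deriv_plus S s x y"
        "quot (S s) x y (- h) \<le> dir_deriv_minus S s x y" "dir_deriv_plus S s x y \<le> quot (S s) x y h"
        using sand[OF elim(1) h(1)] by blast+
      have "norm (dir_deriv_plus S s x y - c) \<le> norm (quot (S s) x y (- h) - c) + norm (quot (S s) x y h - c)"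
        by (rule bl_sandwich[OF bl diff_right_mono[OF order_trans[OF sd(2) sd(1)]] diff_right_mono[OF sd(3)]])
      moreover have "norm (dir_deriv_minus S s x y - c) \<le> norm (quot (S s) x y (- h) - c) + norm (quot (S s) x y h - c)"
        by (rule bl_sandwich[OF bl diff_right_mono[OF sd(2)] diff_right_mono[OF order_trans[OF sd(1) sd(3)]]])
      ultimately show ?case using na nb by (simp add: dist_norm)
    qed
  qed
  have "((\<lambda>s. dir_deriv_plus S s x y) \<longlongrightarrow> c) (at t within {0..})"
    by (rule tendstoI) (use main in \<open>blast intro: eventually_mono\<close>)
  moreover have "((\<lambda>s. dir_deriv_minus S s x y) \<longlongrightarrow> c) (at t within {0..})"
    by (rule tendstoI) (use main in \<open>blast intro: eventually_mono\<close>)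
  ultimately show ?thesis using hyp unfolding c_def by simp
qed

lemma quot_id:
  assumes sg: "convex_C0_semigroup S" and h: "h \<noteq> 0"
  shows "quot (S 0) x y h = y"
  using h by (simp add: quot_def sg_id[OF sg])

lemma dd_at0:
  fixes S :: "real \<Rightarrow> 'a::{banach,ordered_real_vector,lattice} \<Rightarrow> 'a"
  assumes sg: "convex_C0_semigroup S"
  shows "dir_deriv_plus S 0 x y = y" "dir_deriv_minus S 0 x y = y"
proof -
  have i1: "quot (S 0) x y ` {0<..} = (\<lambda>_::real. y) ` {0<..}"
    by (intro image_cong refl quot_id[OF sg]) simp
  have i2: "quot (S 0) x y ` {..<0} = (\<lambda>_::real. y) ` {..<0}"
    by (intro image_cong refl quot_id[OF sg]) simp
  have n1: "{0<..} \<noteq> ({}::real set)" by (metis greaterThan_iff empty_iff gt_ex)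
  have n2: "{..<0} \<noteq> ({}::real set)" by (metis lessThan_iff empty_iff lt_ex)
  have y1: "quot (S 0) x y ` {0<..} = {y}" unfolding i1 using n1 by (simp only: image_constant_conv if_False)
  have y2: "quot (S 0) x y ` {..<0} = {y}" unfolding i2 using n2 by (simp only: image_constant_conv if_False)
  have "is_lat_inf {y} y" unfolding is_lat_inf_def by blast
  thus "dir_deriv_plus S 0 x y = y" unfolding dd_plus_eq y1 by (rule lat_Inf_eq)
  have "is_lat_sup {y} y" unfolding is_lat_sup_def by blast
  thus "dir_deriv_minus S 0 x y = y" unfolding dd_minus_eq y2 by (rule lat_Sup_eq)
qed

theorem proposition3p2:
  fixes S :: "real \<Rightarrow> 'a::{banach, ordered_real_vector, lattice} \<Rightarrow> 'a"
    and x y :: 'a and t :: real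
  assumes "banach_lattice TYPE('a)"
    and "order_continuous_norm TYPE('a)"
    and "convex_C0_semigroup S"
    and "t \<ge> 0"
    and "dir_deriv_plus S t x y = dir_deriv_minus S t x y"
  shows "continuous (at t within {0..}) (\<lambda>s. dir_deriv_plus S s x y) \<and>
         continuous (at t within {0..}) (\<lambda>s. dir_deriv_minus S s x y) \<and>
         ((\<lambda>s. dir_deriv_plus S s x y) \<longlongrightarrow> y) (at_right 0) \<and>
         ((\<lambda>s. dir_deriv_minus S s x y) \<longlongrightarrow> y) (at_right 0)"
proof -
  have A: "((\<lambda>s. dir_deriv_plus S s x y) \<longlongrightarrow> dir_deriv_plus S t x y) (at t within {0..}) \<and>
         ((\<lambda>s. dir_deriv_minus S s x y) \<longlongrightarrow> dir_deriv_minus S t x y) (at t within {0..})"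
    by (rule cont_at[OF assms])
  have h0: "dir_deriv_plus S 0 x y = dir_deriv_minus S 0 x y" using dd_at0[OF assms(3)] by simp
  have B: "((\<lambda>s. dir_deriv_plus S s x y) \<longlongrightarrow> dir_deriv_plus S 0 x y) (at 0 within {0..}) \<and>
         ((\<lambda>s. dir_deriv_minus S s x y) \<longlongrightarrow> dir_deriv_minus S 0 x y) (at 0 within {0..})"
    by (rule cont_at[OF assms(1-3) order.refl h0])
  have sub: "{0<..} \<subseteq> {(0::real)..}" by auto
  have "((\<lambda>s. dir_deriv_plus S s x y) \<longlongrightarrow> y) (at_right 0)"
    using tendsto_within_subset[OF conjunct1[OF B] sub] dd_at0[OF assms(3)] by simp
  moreover have "((\<lambda>s. dir_deriv_minus S s x y) \<longlongrightarrow> y) (at_right 0)"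
    using tendsto_within_subset[OF conjunct2[OF B] sub] dd_at0[OF assms(3)] by simp
  ultimately show ?thesis using A unfolding continuous_within by blast
qed

end
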